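(* Let $(\mathbf{x}^1,y_l^1,y_r^1),\dots,(\mathbf{x}^T,y_l^T,y_r^T)$ be a sequence of examples with $\mathbf{x}^t\in\mathbb{R}^d$ and integers $1\le y_l^t\le y_r^t\le K$, and run PA-II with parameter $C>0$ starting from $\mathbf{w}^1=\mathbf{0}$, $\boldsymbol\theta^1=\mathbf{0}$. Let $\mathbf{v}^*=(\mathbf{u}^*,\mathbf{b}^* )$, $\mathbf{u}^*\in\mathbb{R}^d$, $\mathbf{b}^*\in\mathbb{R}^{K-1}$, be an ideal predictor: $\mathbf{u}^*\cdot\mathbf{x}^t-b_i^*\ge1$ for all $i\in\{1,\dots,y_l^t-1\}$, $t\in[T]$, and $\mathbf{u}^*\cdot\mathbf{x}^t-b_i^*\le-1$ for all $i\in\{y_r^t,\dots,K-1\}$, $t\in[T]$. Let $c=\min_{t\in[T]}(y_r^t-y_l^t)$ and $R^2=\max_{t\in[T]}\Vert\mathbf{x}^t\Vert^2$. Then $$\sum_{t=1}^T\sum_{i=1}^{K-1}(l_i^t)^2\le\left(1+\frac{1}{2C}+R^2(K-c-1)\right)\Vert\mathbf{v}^*\Vert^2,$$ where $\Vert\mathbf{v}^*\Vert^2=\Vert\mathbf{u}^*\Vert^2+\Vert\mathbf{b}^*\Vert^2$.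
   Context: PA-II algorithm with parameter $C>0$: at trial $t$, with $I_t=\{1,\dots,y_l^t-1\}\cup\{y_r^t,\dots,K-1\}$, $(\mathbf{w}^{t+1},\boldsymbol\theta^{t+1})$ is the $(\mathbf{w},\boldsymbol\theta)$-part of the minimizer over $\mathbf{w},\boldsymbol\theta,(\xi_i)_{i\in I_t}$ of $\tfrac12\Vert\mathbf{w}-\mathbf{w}^t\Vert^2+\tfrac12\Vert\boldsymbol\theta-\boldsymbol\theta^t\Vert^2+C\sum_{i\in I_t}\xi_i^2$ subject to $\mathbf{w}\cdot\mathbf{x}^t-\theta_i\ge1-\xi_i$ ($i\le y_l^t-1$) and $\mathbf{w}\cdot\mathbf{x}^t-\theta_i\le-1+\xi_i$ ($i\ge y_r^t$). Losses: $l_i^t=\max(0,1+\theta_i^t-\mathbf{w}^t\cdot\mathbf{x}^t)$ for $1\le i\le y_l^t-1$, $l_i^t=\max(0,1+\mathbf{w}^t\cdot\mathbf{x}^t-\theta_i^t)$ for $y_r^t\le i\le K-1$, $l_i^t=0$ otherwise. *)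

theory Defs
  imports "HOL-Analysis.Analysis"
begin

text \<open>Thresholds are represented as functions nat => real, meaningful on the
index set {1..K-1}; PA-II iterates keep them zero outside that set.\<close>

definition Iset :: "nat \<Rightarrow> nat \<Rightarrow> nat \<Rightarrow> nat set" where
  "Iset K yl yr = {1..yl - 1} \<union> {yr..K - 1}"

definition pa2_feasible ::
  "nat \<Rightarrow> 'a::euclidean_space \<Rightarrow> nat \<Rightarrow> nat \<Rightarrow> 'a \<Rightarrow> (nat \<Rightarrow> real) \<Rightarrow> (nat \<Rightarrow> real) \<Rightarrow> bool" where
  "pa2_feasible K x yl yr w \<theta> \<xi> \<longleftrightarrow>
     (\<forall>i. i \<notin> {1..K - 1} \<longrightarrow> \<theta> i = 0) \<and>
     (\<forall>i\<in>{1..yl - 1}. w \<bullet> x - \<theta> i \<ge> 1 - \<xi> i) \<and>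
     (\<forall>i\<in>{yr..K - 1}. w \<bullet> x - \<theta> i \<le> -1 + \<xi> i)"

definition pa2_obj ::
  "real \<Rightarrow> nat \<Rightarrow> nat \<Rightarrow> nat \<Rightarrow> 'a::euclidean_space \<Rightarrow> (nat \<Rightarrow> real) \<Rightarrow> 'a \<Rightarrow> (nat \<Rightarrow> real) \<Rightarrow> (nat \<Rightarrow> real) \<Rightarrow> real" where
  "pa2_obj C K yl yr w0 \<theta>0 w \<theta> \<xi> =
     (1/2) * (norm (w - w0))\<^sup>2 + (1/2) * (\<Sum>i=1..K - 1. (\<theta> i - \<theta>0 i)\<^sup>2)
     + C * (\<Sum>i\<in>Iset K yl yr. (\<xi> i)\<^sup>2)"

definition pa2_is_min ::
  "real \<Rightarrow> nat \<Rightarrow> 'a::euclidean_space \<Rightarrow> nat \<Rightarrow> nat \<Rightarrow> 'a \<Rightarrow> (nat \<Rightarrow> real) \<Rightarrow> 'a \<Rightarrow> (nat \<Rightarrow> real) \<Rightarrow> (nat \<Rightarrow> real) \<Rightarrow> bool" where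
  "pa2_is_min C K x yl yr w0 \<theta>0 w \<theta> \<xi> \<longleftrightarrow>
     pa2_feasible K x yl yr w \<theta> \<xi> \<and>
     (\<forall>w' \<theta>' \<xi>'. pa2_feasible K x yl yr w' \<theta>' \<xi>' \<longrightarrow>
        pa2_obj C K yl yr w0 \<theta>0 w \<theta> \<xi> \<le> pa2_obj C K yl yr w0 \<theta>0 w' \<theta>' \<xi>')"

text \<open>One PA-II update: the (w, theta)-part of the (unique) minimizer.\<close>
definition pa2_step ::
  "real \<Rightarrow> nat \<Rightarrow> 'a::euclidean_space \<Rightarrow> nat \<Rightarrow> nat \<Rightarrow> 'a \<times> (nat \<Rightarrow> real) \<Rightarrow> 'a \<times> (nat \<Rightarrow> real)" where
  "pa2_step C K x yl yr s =
     (THE p. \<exists>\<xi>. pa2_is_min C K x yl yr (fst s) (snd s) (fst p) (snd p) \<xi>)"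

text \<open>pa2_state C K x yl yr n = (w^(n+1), theta^(n+1)), i.e. the state before trial n+1.\<close>
primrec pa2_state ::
  "real \<Rightarrow> nat \<Rightarrow> (nat \<Rightarrow> 'a::euclidean_space) \<Rightarrow> (nat \<Rightarrow> nat) \<Rightarrow> (nat \<Rightarrow> nat) \<Rightarrow> nat \<Rightarrow> 'a \<times> (nat \<Rightarrow> real)" where
  "pa2_state C K x yl yr 0 = (0, (\<lambda>_. 0))"
| "pa2_state C K x yl yr (Suc n) =
     pa2_step C K (x (Suc n)) (yl (Suc n)) (yr (Suc n)) (pa2_state C K x yl yr n)"

definition pa_loss :: "nat \<Rightarrow> 'a::euclidean_space \<Rightarrow> nat \<Rightarrow> nat \<Rightarrow> 'a \<Rightarrow> (nat \<Rightarrow> real) \<Rightarrow> nat \<Rightarrow> real" where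
  "pa_loss K x yl yr w \<theta> i =
     (if 1 \<le> i \<and> i \<le> yl - 1 then max 0 (1 + \<theta> i - w \<bullet> x)
      else if yr \<le> i \<and> i \<le> K - 1 then max 0 (1 + w \<bullet> x - \<theta> i)
      else 0)"

end

theory Submission
  imports Defs
begin

definition sg :: "nat \<Rightarrow> nat \<Rightarrow> real" where
  "sg yl i = (if i \<le> yl - 1 then 1 else -1)"

lemma sg_sq[simp]: "sg yl i * sg yl i = 1"
  by (simp add: sg_def)

lemma finite_Iset[simp]: "finite (Iset K yl yr)"
  by (simp add: Iset_def)

lemma Iset_sub: "1 \<le> yl \<Longrightarrow> yl \<le> yr \<Longrightarrow> yl \<le> K \<Longrightarrow> Iset K yl yr \<subseteq> {1..K-1}"
  by (auto simp: Iset_def)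

lemma feas_iff:
  assumes "1 \<le> yl" "yl \<le> yr"
  shows "pa2_feasible K x yl yr w \<theta> \<xi> \<longleftrightarrow>
    (\<forall>i. i \<notin> {1..K-1} \<longrightarrow> \<theta> i = 0) \<and>
    (\<forall>i\<in>Iset K yl yr. sg yl i * (w \<bullet> x - \<theta> i) + \<xi> i \<ge> 1)"
proof -
  have a: "i \<in> {1..yl-1} \<Longrightarrow> sg yl i = 1" for i by (auto simp: sg_def)
  have b: "i \<in> {yr..K-1} \<Longrightarrow> sg yl i = -1" for i using assms by (auto simp: sg_def)
  show ?thesis unfolding pa2_feasible_def Iset_def
  proof (intro iffI conjI; (elim conjE)?)
    assume h: "\<forall>i. i \<notin> {1..K - 1} \<longrightarrow> \<theta> i = 0"
      "\<forall>i\<in>{1..yl - 1}. 1 - \<xi> i \<le> w \<bullet> x - \<theta> i"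
      "\<forall>i\<in>{yr..K - 1}. w \<bullet> x - \<theta> i \<le> - 1 + \<xi> i"
    show "\<forall>i. i \<notin> {1..K - 1} \<longrightarrow> \<theta> i = 0" using h by blast
    show "\<forall>i\<in>{1..yl - 1} \<union> {yr..K - 1}. 1 \<le> sg yl i * (w \<bullet> x - \<theta> i) + \<xi> i"
    proof
      fix i assume "i \<in> {1..yl - 1} \<union> {yr..K - 1}"
      then show "1 \<le> sg yl i * (w \<bullet> x - \<theta> i) + \<xi> i"
      proof
        assume i: "i \<in> {1..yl - 1}" have "1 - \<xi> i \<le> w \<bullet> x - \<theta> i" using h(2) i by blast
        then show ?thesis using a[OF i] by simp
      next
        assume i: "i \<in> {yr..K - 1}" have "w \<bullet> x - \<theta> i \<le> -1 + \<xi> i" using h(3) i by blast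
        then show ?thesis using b[OF i] by simp
      qed
    qed
  next
    assume h: "\<forall>i. i \<notin> {1..K - 1} \<longrightarrow> \<theta> i = 0"
      "\<forall>i\<in>{1..yl - 1} \<union> {yr..K - 1}. 1 \<le> sg yl i * (w \<bullet> x - \<theta> i) + \<xi> i"
    show "\<forall>i. i \<notin> {1..K - 1} \<longrightarrow> \<theta> i = 0" using h by blast
    show "\<forall>i\<in>{1..yl - 1}. 1 - \<xi> i \<le> w \<bullet> x - \<theta> i"
      using h(2) a by force
    show "\<forall>i\<in>{yr..K - 1}. w \<bullet> x - \<theta> i \<le> - 1 + \<xi> i"
      using h(2) b by force
  qed
qed

lemma loss_eq:
  assumes "1 \<le> yl" "yl \<le> yr"
  shows "pa_loss K x yl yr w \<theta> i =
    (if i \<in> Iset K yl yr then max 0 (1 - sg yl i * (w \<bullet> x - \<theta> i)) else 0)"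
  using assms unfolding pa_loss_def Iset_def sg_def by auto

lemma card_Iset:
  assumes "1 \<le> yl" "yl \<le> yr" "yr \<le> K"
  shows "real (card (Iset K yl yr)) = real K - 1 - real (yr - yl)"
proof -
  have "{1..yl-1} \<inter> {yr..K-1} = {}" using assms by auto
  then have "card (Iset K yl yr) = card {1..yl-1} + card {yr..K-1}"
    unfolding Iset_def by (simp add: card_Un_disjoint)
  also have "\<dots> = (yl - 1) + (K - yr)" using assms by simp
  finally show ?thesis using assms by (simp add: of_nat_diff)
qed

lemma cs2:
  fixes a b al be :: real
  assumes "al > 0" "be > 0"
  shows "(a + b)^2 \<le> (al + be) * (a^2/al + b^2/be)"
proof -
  have "(al + be) * (a^2/al + b^2/be) - (a + b)^2 = (be*a - al*b)^2 / (al*be)"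
    using assms by (simp add: field_simps power2_eq_square)
  moreover have "(be*a - al*b)^2 / (al*be) \<ge> 0" using assms by simp
  ultimately show ?thesis by linarith
qed


definition KP where
  "KP C K x yl yr w0 \<theta>0 w \<theta> \<xi> \<longleftrightarrow> pa2_feasible K x yl yr w \<theta> \<xi> \<and>
    (\<forall>w' \<theta>' \<xi>'. pa2_feasible K x yl yr w' \<theta>' \<xi>' \<longrightarrow>
       pa2_obj C K yl yr w0 \<theta>0 w \<theta> \<xi> + (1/2) * (norm (w' - w))\<^sup>2
         + (1/2) * (\<Sum>i=1..K-1. (\<theta>' i - \<theta> i)\<^sup>2)
         + C * (\<Sum>i\<in>Iset K yl yr. (\<xi>' i - \<xi> i)\<^sup>2)
       \<le> pa2_obj C K yl yr w0 \<theta>0 w' \<theta>' \<xi>')"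

lemma norm_expand:
  fixes a b c :: "'a::real_inner"
  shows "(norm (b - a))\<^sup>2 = (norm (c - a))\<^sup>2 + 2 * ((c - a) \<bullet> (b - c)) + (norm (b - c))\<^sup>2"
  by (simp add: power2_norm_eq_inner inner_diff_left inner_diff_right inner_commute algebra_simps)

lemma KP_exists:
  assumes C: "C > 0" and lab: "1 \<le> yl" "yl \<le> yr" "yr \<le> K"
  shows "\<exists>w \<theta> \<xi>. KP C K x yl yr w0 \<theta>0 w \<theta> \<xi>"
proof -
  define I where "I = Iset K yl yr"
  define \<mu> where "\<mu> = 1 + 1/(2*C)"
  define X where "X = x \<bullet> x"
  define \<tau> where "\<tau> = (\<lambda>m i. max 0 (1 - sg yl i * (m - \<theta>0 i)) / \<mu>)"
  define \<sigma> where "\<sigma> = (\<lambda>m. \<Sum>i\<in>I. sg yl i * \<tau> m i)"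
  define g where "g = (\<lambda>m. m - w0 \<bullet> x - X * \<sigma> m)"
  have fin: "finite I" by (simp add: I_def)
  have ISub: "I \<subseteq> {1..K-1}" unfolding I_def using Iset_sub lab by auto
  have mu: "\<mu> > 0" using C unfolding \<mu>_def by (smt (verit) divide_pos_pos)
  have Xge: "X \<ge> 0" by (simp add: X_def)
  have tau_ge: "\<tau> m i \<ge> 0" for m i using mu by (simp add: \<tau>_def)
  have mono: "\<sigma> m' \<le> \<sigma> m" if "m \<le> m'" for m m'
    unfolding \<sigma>_def
  proof (rule sum_mono)
    fix i assume "i \<in> I"
    show "sg yl i * \<tau> m' i \<le> sg yl i * \<tau> m i"
      using that mu by (auto simp: sg_def \<tau>_def divide_right_mono)
  qed
  have cont: "continuous_on S g" for S
    unfolding g_def \<sigma>_def \<tau>_def using mu by (intro continuous_intros) auto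
  define c0 where "c0 = w0 \<bullet> x + X * \<sigma> 0"
  have lo: "g (min 0 c0) \<le> 0"
  proof -
    have "\<sigma> 0 \<le> \<sigma> (min 0 c0)" by (rule mono) simp
    then have "X * \<sigma> 0 \<le> X * \<sigma> (min 0 c0)" using Xge by (simp add: mult_left_mono)
    then show ?thesis unfolding g_def c0_def by linarith
  qed
  have hi: "g (max 0 c0) \<ge> 0"
  proof -
    have "\<sigma> (max 0 c0) \<le> \<sigma> 0" by (rule mono) simp
    then have "X * \<sigma> (max 0 c0) \<le> X * \<sigma> 0" using Xge by (simp add: mult_left_mono)
    then show ?thesis unfolding g_def c0_def by linarith
  qed
  obtain m where gm: "g m = 0"
    using IVT'[of g "min 0 c0" 0 "max 0 c0", OF lo hi _ cont] by (metis min.cobounded1 max.cobounded1 order.trans)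
  define w where "w = w0 + \<sigma> m *\<^sub>R x"
  define \<theta> where "\<theta> = (\<lambda>i. if i \<in> I then \<theta>0 i - sg yl i * \<tau> m i
                         else if i \<in> {1..K-1} then \<theta>0 i else 0)"
  define \<xi> where "\<xi> = (\<lambda>i. \<tau> m i / (2*C))"
  have wx: "w \<bullet> x = m" using gm unfolding w_def g_def X_def
    by (simp add: inner_add_left algebra_simps)
  have act: "sg yl i * (m - \<theta> i) + \<xi> i = max 1 (sg yl i * (m - \<theta>0 i))" if "i \<in> I" for i
  proof -
    have "sg yl i * (m - \<theta> i) + \<xi> i = sg yl i * (m - \<theta>0 i) + \<mu> * \<tau> m i"
      using that C by (simp add: \<theta>_def \<xi>_def \<mu>_def algebra_simps)
    also have "\<mu> * \<tau> m i = max 0 (1 - sg yl i * (m - \<theta>0 i))"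
      using mu by (simp add: \<tau>_def)
    finally show ?thesis by linarith
  qed
  have feas: "pa2_feasible K x yl yr w \<theta> \<xi>"
    unfolding feas_iff[OF lab(1,2)]
  proof
    show "\<forall>i. i \<notin> {1..K - 1} \<longrightarrow> \<theta> i = 0" using ISub by (auto simp: \<theta>_def)
    show "\<forall>i\<in>Iset K yl yr. 1 \<le> sg yl i * (w \<bullet> x - \<theta> i) + \<xi> i"
      using act wx unfolding I_def by fastforce
  qed
  have "KP C K x yl yr w0 \<theta>0 w \<theta> \<xi>"
    unfolding KP_def
  proof (intro conjI allI impI feas)
    fix w' \<theta>' \<xi>'
    assume f': "pa2_feasible K x yl yr w' \<theta>' \<xi>'"
    then have f'': "\<forall>i\<in>I. 1 \<le> sg yl i * (w' \<bullet> x - \<theta>' i) + \<xi>' i"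
      unfolding feas_iff[OF lab(1,2)] I_def by blast
    define Lin where "Lin = (w - w0) \<bullet> (w' - w) + (\<Sum>i=1..K-1. (\<theta> i - \<theta>0 i) * (\<theta>' i - \<theta> i))
        + 2 * C * (\<Sum>i\<in>I. \<xi> i * (\<xi>' i - \<xi> i))"
    have e1: "(w - w0) \<bullet> (w' - w) = (\<Sum>i\<in>I. \<tau> m i * (sg yl i * (w' \<bullet> x - m)))"
    proof -
      have "(w - w0) \<bullet> (w' - w) = \<sigma> m * (w' \<bullet> x - m)"
        using wx by (simp add: w_def inner_diff_right inner_commute right_diff_distrib)
      also have "\<dots> = (\<Sum>i\<in>I. \<tau> m i * (sg yl i * (w' \<bullet> x - m)))"
        unfolding \<sigma>_def sum_distrib_right by (simp add: mult.commute mult.left_commute)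
      finally show ?thesis .
    qed
    have e2: "(\<Sum>i=1..K-1. (\<theta> i - \<theta>0 i) * (\<theta>' i - \<theta> i))
            = (\<Sum>i\<in>I. \<tau> m i * (- sg yl i * (\<theta>' i - \<theta> i)))"
    proof -
      have "(\<Sum>i=1..K-1. (\<theta> i - \<theta>0 i) * (\<theta>' i - \<theta> i)) = (\<Sum>i\<in>I. (\<theta> i - \<theta>0 i) * (\<theta>' i - \<theta> i))"
        by (rule sum.mono_neutral_right) (use ISub in \<open>auto simp: \<theta>_def\<close>)
      also have "\<dots> = (\<Sum>i\<in>I. \<tau> m i * (- sg yl i * (\<theta>' i - \<theta> i)))"
        by (rule sum.cong) (auto simp: \<theta>_def)
      finally show ?thesis .
    qed
    have e3: "2 * C * (\<Sum>i\<in>I. \<xi> i * (\<xi>' i - \<xi> i)) = (\<Sum>i\<in>I. \<tau> m i * (\<xi>' i - \<xi> i))"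
      unfolding sum_distrib_left using C by (intro sum.cong) (auto simp: \<xi>_def)
    have "Lin = (\<Sum>i\<in>I. \<tau> m i * ((sg yl i * (w' \<bullet> x - \<theta>' i) + \<xi>' i) - (sg yl i * (m - \<theta> i) + \<xi> i)))"
      unfolding Lin_def e1 e2 e3 sum.distrib[symmetric]
      by (rule sum.cong) (auto simp: algebra_simps)
    also have "\<dots> \<ge> 0"
    proof (rule sum_nonneg)
      fix i assume i: "i \<in> I"
      show "0 \<le> \<tau> m i * ((sg yl i * (w' \<bullet> x - \<theta>' i) + \<xi>' i) - (sg yl i * (m - \<theta> i) + \<xi> i))"
      proof (cases "\<tau> m i = 0")
        case False
        then have "1 - sg yl i * (m - \<theta>0 i) > 0" using mu by (auto simp: \<tau>_def max_def split: if_splits)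
        then have "sg yl i * (m - \<theta> i) + \<xi> i = 1" using act[OF i] by simp
        then show ?thesis using f''[rule_format, OF i] tau_ge[of m i] by simp
      qed simp
    qed
    finally have Lin0: "Lin \<ge> 0" .
    have q1: "(\<Sum>i=1..K-1. (\<theta>' i - \<theta>0 i)\<^sup>2) = (\<Sum>i=1..K-1. (\<theta> i - \<theta>0 i)\<^sup>2)
        + 2 * (\<Sum>i=1..K-1. (\<theta> i - \<theta>0 i) * (\<theta>' i - \<theta> i)) + (\<Sum>i=1..K-1. (\<theta>' i - \<theta> i)\<^sup>2)"
      unfolding sum_distrib_left sum.distrib[symmetric]
      by (rule sum.cong) (auto simp: power2_eq_square algebra_simps)
    have q2: "(\<Sum>i\<in>I. (\<xi>' i)\<^sup>2) = (\<Sum>i\<in>I. (\<xi> i)\<^sup>2)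
        + 2 * (\<Sum>i\<in>I. \<xi> i * (\<xi>' i - \<xi> i)) + (\<Sum>i\<in>I. (\<xi>' i - \<xi> i)\<^sup>2)"
      unfolding sum_distrib_left sum.distrib[symmetric]
      by (rule sum.cong) (auto simp: power2_eq_square algebra_simps)
    have q0: "(norm (w' - w0))\<^sup>2 = (norm (w - w0))\<^sup>2 + 2 * ((w - w0) \<bullet> (w' - w)) + (norm (w' - w))\<^sup>2"
      by (rule norm_expand)
    show "pa2_obj C K yl yr w0 \<theta>0 w \<theta> \<xi> + 1 / 2 * (norm (w' - w))\<^sup>2 +
          1 / 2 * (\<Sum>i = 1..K - 1. (\<theta>' i - \<theta> i)\<^sup>2) + C * (\<Sum>i\<in>Iset K yl yr. (\<xi>' i - \<xi> i)\<^sup>2)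
          \<le> pa2_obj C K yl yr w0 \<theta>0 w' \<theta>' \<xi>'"
      unfolding pa2_obj_def I_def[symmetric] q0 q1 q2 using Lin0 unfolding Lin_def
      by (simp add: algebra_simps)
  qed
  then show ?thesis by blast
qed


lemma obj_nonneg: "C > 0 \<Longrightarrow> pa2_obj C K yl yr w0 \<theta>0 w \<theta> \<xi> \<ge> 0"
  unfolding pa2_obj_def by (intro add_nonneg_nonneg mult_nonneg_nonneg sum_nonneg) auto

lemma KP_step:
  assumes C: "C > 0" and lab: "1 \<le> yl" "yl \<le> yr" "yr \<le> K"
    and kp: "KP C K x yl yr w0 \<theta>0 w \<theta> \<xi>"
  shows "pa2_step C K x yl yr (w0, \<theta>0) = (w, \<theta>)"
proof -
  have feas: "pa2_feasible K x yl yr w \<theta> \<xi>" using kp KP_def by blast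
  have min: "pa2_is_min C K x yl yr w0 \<theta>0 w \<theta> \<xi>"
    unfolding pa2_is_min_def
  proof (intro conjI allI impI feas)
    fix w' \<theta>' \<xi>' assume f: "pa2_feasible K x yl yr w' \<theta>' \<xi>'"
    have "0 \<le> (1/2) * (norm (w' - w))\<^sup>2 + (1/2) * (\<Sum>i=1..K-1. (\<theta>' i - \<theta> i)\<^sup>2)
         + C * (\<Sum>i\<in>Iset K yl yr. (\<xi>' i - \<xi> i)\<^sup>2)"
      using C by (intro add_nonneg_nonneg mult_nonneg_nonneg sum_nonneg) auto
    moreover have "pa2_obj C K yl yr w0 \<theta>0 w \<theta> \<xi> + (1/2) * (norm (w' - w))\<^sup>2
         + (1/2) * (\<Sum>i=1..K-1. (\<theta>' i - \<theta> i)\<^sup>2)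
         + C * (\<Sum>i\<in>Iset K yl yr. (\<xi>' i - \<xi> i)\<^sup>2)
       \<le> pa2_obj C K yl yr w0 \<theta>0 w' \<theta>' \<xi>'" using kp f unfolding KP_def by blast
    ultimately show "pa2_obj C K yl yr w0 \<theta>0 w \<theta> \<xi> \<le> pa2_obj C K yl yr w0 \<theta>0 w' \<theta>' \<xi>'"
      by linarith
  qed
  show ?thesis unfolding pa2_step_def
  proof (rule the_equality)
    show "\<exists>\<xi>. pa2_is_min C K x yl yr (fst (w0, \<theta>0)) (snd (w0, \<theta>0)) (fst (w, \<theta>)) (snd (w, \<theta>)) \<xi>"
      using min by auto
    fix p assume "\<exists>\<xi>. pa2_is_min C K x yl yr (fst (w0, \<theta>0)) (snd (w0, \<theta>0)) (fst p) (snd p) \<xi>"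
    then obtain \<xi>2 where m2: "pa2_is_min C K x yl yr w0 \<theta>0 (fst p) (snd p) \<xi>2" by auto
    have f2: "pa2_feasible K x yl yr (fst p) (snd p) \<xi>2" using m2 pa2_is_min_def by blast
    have le: "pa2_obj C K yl yr w0 \<theta>0 (fst p) (snd p) \<xi>2 \<le> pa2_obj C K yl yr w0 \<theta>0 w \<theta> \<xi>"
      using m2 feas unfolding pa2_is_min_def by blast
    have ge: "pa2_obj C K yl yr w0 \<theta>0 w \<theta> \<xi> + (1/2) * (norm (fst p - w))\<^sup>2
         + (1/2) * (\<Sum>i=1..K-1. (snd p i - \<theta> i)\<^sup>2)
         + C * (\<Sum>i\<in>Iset K yl yr. (\<xi>2 i - \<xi> i)\<^sup>2)
       \<le> pa2_obj C K yl yr w0 \<theta>0 (fst p) (snd p) \<xi>2" using kp f2 unfolding KP_def by blast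
    have n1: "0 \<le> (norm (fst p - w))\<^sup>2" by simp
    have n2: "0 \<le> (\<Sum>i=1..K-1. (snd p i - \<theta> i)\<^sup>2)" by (intro sum_nonneg) auto
    have n3: "0 \<le> C * (\<Sum>i\<in>Iset K yl yr. (\<xi>2 i - \<xi> i)\<^sup>2)"
      using C by (intro mult_nonneg_nonneg sum_nonneg) auto
    have z1: "(norm (fst p - w))\<^sup>2 = 0" using le ge n1 n2 n3 by linarith
    have z2: "(\<Sum>i=1..K-1. (snd p i - \<theta> i)\<^sup>2) = 0" using le ge n1 n2 n3 by linarith
    have "fst p = w" using z1 by simp
    moreover have "snd p = \<theta>"
    proof
      fix i show "snd p i = \<theta> i"
      proof (cases "i \<in> {1..K-1}")
        case True
        have "\<forall>j\<in>{1..K-1}. (snd p j - \<theta> j)\<^sup>2 = 0"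
          using z2 sum_nonneg_eq_0_iff[of "{1..K-1}" "\<lambda>j. (snd p j - \<theta> j)\<^sup>2"] by simp
        then have "(snd p i - \<theta> i)\<^sup>2 = 0" using True by blast
        then show ?thesis by simp
      next
        case False
        then show ?thesis using f2 feas unfolding pa2_feasible_def by auto
      qed
    qed
    ultimately show "p = (w, \<theta>)" by (cases p) auto
  qed
qed

lemma step_progress:
  assumes C: "C > 0" and kp: "KP C K x yl yr w0 \<theta>0 w \<theta> \<xi>"
    and fu: "pa2_feasible K x yl yr u b (\<lambda>_. 0)"
  shows "2 * pa2_obj C K yl yr w0 \<theta>0 w \<theta> \<xi> \<le>
     ((norm (u - w0))\<^sup>2 + (\<Sum>i=1..K-1. (b i - \<theta>0 i)\<^sup>2))
     - ((norm (u - w))\<^sup>2 + (\<Sum>i=1..K-1. (b i - \<theta> i)\<^sup>2))"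
proof -
  have ge: "pa2_obj C K yl yr w0 \<theta>0 w \<theta> \<xi> + (1/2) * (norm (u - w))\<^sup>2
         + (1/2) * (\<Sum>i=1..K-1. (b i - \<theta> i)\<^sup>2)
         + C * (\<Sum>i\<in>Iset K yl yr. (0 - \<xi> i)\<^sup>2)
       \<le> pa2_obj C K yl yr w0 \<theta>0 u b (\<lambda>_. 0)" using kp fu unfolding KP_def by blast
  have n3: "0 \<le> C * (\<Sum>i\<in>Iset K yl yr. (0 - \<xi> i)\<^sup>2)"
    using C by (intro mult_nonneg_nonneg sum_nonneg) auto
  have "pa2_obj C K yl yr w0 \<theta>0 u b (\<lambda>_. 0) = (1/2) * (norm (u - w0))\<^sup>2 + (1/2) * (\<Sum>i=1..K-1. (b i - \<theta>0 i)\<^sup>2)"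
    by (simp add: pa2_obj_def)
  then show ?thesis using ge n3 by linarith
qed

lemma cs3:
  fixes a b c al be :: real
  assumes "al > 0" "be > 0 \<or> (be = 0 \<and> b = 0)"
  shows "(a + b + c)^2 \<le> (al + be + 1) * (a^2/al + b^2/be + c^2)"
  using assms(2)
proof
  assume be: "be > 0"
  have "(a + b + c)^2 \<le> ((al + be) + 1) * ((a+b)^2/(al+be) + c^2/1)"
    using assms(1) be by (intro cs2) auto
  also have "(a+b)^2/(al+be) \<le> a^2/al + b^2/be"
    using cs2[OF assms(1) be, of a b] assms(1) be by (simp add: divide_le_eq mult.commute)
  then have "((al + be) + 1) * ((a+b)^2/(al+be) + c^2/1) \<le> (al + be + 1) * (a^2/al + b^2/be + c^2)"
    using assms(1) be by (intro mult_left_mono) auto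
  finally show ?thesis .
next
  assume h: "be = 0 \<and> b = 0"
  have "(a + c)^2 \<le> (al + 1) * (a^2/al + c^2/1)" using assms(1) by (intro cs2) auto
  then show ?thesis using h by simp
qed

lemma loss_bound:
  assumes C: "C > 0" and lab: "1 \<le> yl" "yl \<le> yr" "yr \<le> K"
    and f: "pa2_feasible K x yl yr w \<theta> \<xi>"
  shows "(\<Sum>i=1..K-1. (pa_loss K x yl yr w0 \<theta>0 i)\<^sup>2)
    \<le> 2 * (1 + 1/(2*C) + real (card (Iset K yl yr)) * (norm x)\<^sup>2) * pa2_obj C K yl yr w0 \<theta>0 w \<theta> \<xi>"
proof -
  define I where "I = Iset K yl yr"
  define n where "n = real (card I)"
  define X where "X = (norm x)\<^sup>2"
  define al where "al = 1/(2*C)"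
  define be where "be = n * X"
  define p where "p = (w - w0) \<bullet> x"
  define D where "D = (norm (w - w0))\<^sup>2"
  define l where "l = (\<lambda>i. max 0 (1 - sg yl i * (w0 \<bullet> x - \<theta>0 i)))"
  have ISub: "I \<subseteq> {1..K-1}" unfolding I_def using Iset_sub lab by auto
  have al: "al > 0" using C by (simp add: al_def)
  have f': "\<forall>i\<in>I. 1 \<le> sg yl i * (w \<bullet> x - \<theta> i) + \<xi> i"
    using f unfolding feas_iff[OF lab(1,2)] I_def by blast
  have sum1: "(\<Sum>i=1..K-1. (pa_loss K x yl yr w0 \<theta>0 i)\<^sup>2) = (\<Sum>i\<in>I. (l i)\<^sup>2)"
    by (rule sum.mono_neutral_cong_right) (use ISub in \<open>auto simp: loss_eq[OF lab(1,2)] l_def I_def\<close>)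
  have pD: "p\<^sup>2 \<le> X * D"
  proof -
    have "\<bar>p\<bar> \<le> norm (w - w0) * norm x" unfolding p_def by (rule Cauchy_Schwarz_ineq2)
    then have "\<bar>p\<bar>\<^sup>2 \<le> (norm (w - w0) * norm x)\<^sup>2" by (intro power_mono) auto
    then show ?thesis by (simp add: X_def D_def power_mult_distrib mult.commute)
  qed
  have pt: "(l i)\<^sup>2 \<le> (al + be + 1) * ((\<xi> i)\<^sup>2/al + p\<^sup>2/be + (\<theta> i - \<theta>0 i)\<^sup>2)" if i: "i \<in> I" for i
  proof -
    have "w \<bullet> x - \<theta> i = (w0 \<bullet> x - \<theta>0 i) + p - (\<theta> i - \<theta>0 i)"
      by (simp add: p_def inner_diff_left)
    then have "1 - sg yl i * (w0 \<bullet> x - \<theta>0 i) \<le> \<xi> i + sg yl i * (p - (\<theta> i - \<theta>0 i))"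
      using f'[rule_format, OF i] by (simp add: algebra_simps)
    also have "\<dots> \<le> \<bar>\<xi> i\<bar> + \<bar>p\<bar> + \<bar>\<theta> i - \<theta>0 i\<bar>"
      by (auto simp: sg_def)
    finally have "l i \<le> \<bar>\<xi> i\<bar> + \<bar>p\<bar> + \<bar>\<theta> i - \<theta>0 i\<bar>" unfolding l_def by simp
    moreover have "0 \<le> l i" unfolding l_def by simp
    ultimately have "(l i)\<^sup>2 \<le> (\<bar>\<xi> i\<bar> + \<bar>p\<bar> + \<bar>\<theta> i - \<theta>0 i\<bar>)\<^sup>2" by (intro power_mono) auto
    also have "\<dots> \<le> (al + be + 1) * (\<bar>\<xi> i\<bar>\<^sup>2/al + \<bar>p\<bar>\<^sup>2/be + \<bar>\<theta> i - \<theta>0 i\<bar>\<^sup>2)"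
    proof (rule cs3[OF al])
      have "n > 0" using i unfolding n_def I_def by (auto simp: card_gt_0_iff)
      then show "be > 0 \<or> (be = 0 \<and> \<bar>p\<bar> = 0)"
      proof (cases "X = 0")
        case True
        then have "p\<^sup>2 \<le> 0" using pD by simp
        then show ?thesis using True by (simp add: be_def)
      next
        case False
        then have "X > 0" by (simp add: X_def)
        then show ?thesis using \<open>n > 0\<close> by (simp add: be_def)
      qed
    qed
    finally show ?thesis by simp
  qed
  have "(\<Sum>i\<in>I. (l i)\<^sup>2) \<le> (\<Sum>i\<in>I. (al + be + 1) * ((\<xi> i)\<^sup>2/al + p\<^sup>2/be + (\<theta> i - \<theta>0 i)\<^sup>2))"
    using pt by (rule sum_mono)
  also have "\<dots> = (al + be + 1) * (2 * C * (\<Sum>i\<in>I. (\<xi> i)\<^sup>2) + n * (p\<^sup>2/be) + (\<Sum>i\<in>I. (\<theta> i - \<theta>0 i)\<^sup>2))"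
    unfolding sum_distrib_left[symmetric] sum.distrib n_def using C by (simp add: al_def sum_divide_distrib sum_distrib_left mult.commute)
  also have "\<dots> \<le> (al + be + 1) * (2 * C * (\<Sum>i\<in>I. (\<xi> i)\<^sup>2) + D + (\<Sum>i=1..K-1. (\<theta> i - \<theta>0 i)\<^sup>2))"
  proof (rule mult_left_mono)
    have a: "n * (p\<^sup>2/be) \<le> D"
    proof (cases "n = 0 \<or> X = 0")
      case True then show ?thesis by (auto simp: be_def D_def)
    next
      case False
      then have "n > 0" "X > 0" by (auto simp: n_def X_def)
      then have "n * (p\<^sup>2/be) = p\<^sup>2 / X" by (simp add: be_def)
      also have "\<dots> \<le> D" using pD \<open>X > 0\<close> by (simp add: divide_le_eq mult.commute)
      finally show ?thesis .
    qed
    have b: "(\<Sum>i\<in>I. (\<theta> i - \<theta>0 i)\<^sup>2) \<le> (\<Sum>i=1..K-1. (\<theta> i - \<theta>0 i)\<^sup>2)"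
      by (rule sum_mono2) (use ISub in auto)
    show "2 * C * (\<Sum>i\<in>I. (\<xi> i)\<^sup>2) + n * (p\<^sup>2/be) + (\<Sum>i\<in>I. (\<theta> i - \<theta>0 i)\<^sup>2)
      \<le> 2 * C * (\<Sum>i\<in>I. (\<xi> i)\<^sup>2) + D + (\<Sum>i=1..K-1. (\<theta> i - \<theta>0 i)\<^sup>2)" using a b by linarith
    show "0 \<le> al + be + 1" using al by (simp add: be_def n_def X_def)
  qed
  also have "\<dots> = 2 * (1 + 1/(2*C) + real (card (Iset K yl yr)) * (norm x)\<^sup>2) * pa2_obj C K yl yr w0 \<theta>0 w \<theta> \<xi>"
    unfolding pa2_obj_def al_def be_def n_def X_def D_def I_def
    by (simp add: algebra_simps norm_minus_commute)
  finally show ?thesis using sum1 by simp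
qed


lemma telescope: "(\<Sum>t=1..(n::nat). f (t-1) - f t) = (f 0 - f n :: real)"
  by (induct n) auto

theorem corollary3:
  fixes C :: real and K T :: nat
    and x :: "nat \<Rightarrow> 'a::euclidean_space" and yl yr :: "nat \<Rightarrow> nat"
    and u :: 'a and b :: "nat \<Rightarrow> real"
  assumes "C > 0" and "T \<ge> 1"
    and labels: "\<forall>t\<in>{1..T}. 1 \<le> yl t \<and> yl t \<le> yr t \<and> yr t \<le> K"
    and ideal_l: "\<forall>t\<in>{1..T}. \<forall>i\<in>{1..yl t - 1}. u \<bullet> x t - b i \<ge> 1"
    and ideal_r: "\<forall>t\<in>{1..T}. \<forall>i\<in>{yr t..K - 1}. u \<bullet> x t - b i \<le> -1"
  shows "(\<Sum>t=1..T. \<Sum>i=1..K - 1.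
            (pa_loss K (x t) (yl t) (yr t)
               (fst (pa2_state C K x yl yr (t - 1))) (snd (pa2_state C K x yl yr (t - 1))) i)\<^sup>2)
         \<le> (1 + 1 / (2 * C)
              + (Max ((\<lambda>t. (norm (x t))\<^sup>2) ` {1..T}))
                * (real K - real (Min ((\<lambda>t. yr t - yl t) ` {1..T})) - 1))
           * ((norm u)\<^sup>2 + (\<Sum>i=1..K - 1. (b i)\<^sup>2))"
proof -
  note C = \<open>C > 0\<close>
  define v where "v = pa2_state C K x yl yr"
  define b' where "b' = (\<lambda>i. if i \<in> {1..K-1} then b i else 0)"
  define D where "D = (\<lambda>t. (norm (u - fst (v t)))\<^sup>2 + (\<Sum>i=1..K-1. (b' i - snd (v t) i)\<^sup>2))"
  define R2 where "R2 = Max ((\<lambda>t. (norm (x t))\<^sup>2) ` {1..T})"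
  define c where "c = Min ((\<lambda>t. yr t - yl t) ` {1..T})"
  define M where "M = 1 + 1/(2*C) + R2 * (real K - real c - 1)"
  define L where "L = (\<lambda>t. \<Sum>i=1..K-1. (pa_loss K (x t) (yl t) (yr t) (fst (v (t-1))) (snd (v (t-1))) i)\<^sup>2)"
  have step: "L t \<le> M * (D (t-1) - D t)" if t: "t \<in> {1..T}" for t
  proof -
    have lab: "1 \<le> yl t" "yl t \<le> yr t" "yr t \<le> K" using labels t by auto
    obtain w \<theta> \<xi> where kp: "KP C K (x t) (yl t) (yr t) (fst (v (t-1))) (snd (v (t-1))) w \<theta> \<xi>"
      using KP_exists[OF C lab] by blast
    have vt: "v t = (w, \<theta>)"
    proof -
      have "t = Suc (t - 1)" using t by auto
      then have "v t = pa2_step C K (x t) (yl t) (yr t) (v (t-1))"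
        unfolding v_def by (metis pa2_state.simps(2))
      also have "\<dots> = (w, \<theta>)" using KP_step[OF C lab kp] by simp
      finally show ?thesis .
    qed
    have fu: "pa2_feasible K (x t) (yl t) (yr t) u b' (\<lambda>_. 0)"
      unfolding feas_iff[OF lab(1,2)]
    proof
      show "\<forall>i. i \<notin> {1..K - 1} \<longrightarrow> b' i = 0" by (simp add: b'_def)
      show "\<forall>i\<in>Iset K (yl t) (yr t). 1 \<le> sg (yl t) i * (u \<bullet> x t - b' i) + 0"
      proof
        fix i assume "i \<in> Iset K (yl t) (yr t)"
        then consider "i \<in> {1..yl t - 1}" | "i \<in> {yr t..K-1}" unfolding Iset_def by blast
        then show "1 \<le> sg (yl t) i * (u \<bullet> x t - b' i) + 0"
        proof cases
          case 1
          then have "b' i = b i" "sg (yl t) i = 1" using lab by (auto simp: b'_def sg_def)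
          then show ?thesis using ideal_l t 1 by auto
        next
          case 2
          then have "b' i = b i" "sg (yl t) i = -1" using lab by (auto simp: b'_def sg_def)
          then show ?thesis using ideal_r t 2 by fastforce
        qed
      qed
    qed
    define obj where "obj = pa2_obj C K (yl t) (yr t) (fst (v (t-1))) (snd (v (t-1))) w \<theta> \<xi>"
    have prog: "2 * obj \<le> D (t-1) - D t"
      using step_progress[OF C kp fu] unfolding obj_def D_def vt by simp
    have feas: "pa2_feasible K (x t) (yl t) (yr t) w \<theta> \<xi>" using kp KP_def by blast
    define Mt where "Mt = 1 + 1/(2*C) + real (card (Iset K (yl t) (yr t))) * (norm (x t))\<^sup>2"
    have lb: "L t \<le> 2 * Mt * obj"
      unfolding L_def Mt_def obj_def by (rule loss_bound[OF C lab feas])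
    have MtM: "Mt \<le> M"
    proof -
      have "real (card (Iset K (yl t) (yr t))) = real K - 1 - real (yr t - yl t)"
        by (rule card_Iset[OF lab])
      moreover have "c \<le> yr t - yl t" unfolding c_def using t by (intro Min_le) auto
      ultimately have a: "real (card (Iset K (yl t) (yr t))) \<le> real K - real c - 1" by simp
      have b: "(norm (x t))\<^sup>2 \<le> R2" unfolding R2_def using t by (intro Max_ge) auto
      have "real (card (Iset K (yl t) (yr t))) * (norm (x t))\<^sup>2 \<le> (real K - real c - 1) * R2"
        using a b by (intro mult_mono) auto
      then show ?thesis unfolding Mt_def M_def by (simp add: mult.commute)
    qed
    have "0 \<le> obj" unfolding obj_def by (rule obj_nonneg[OF C])
    have Mt0: "Mt \<ge> 0" unfolding Mt_def using C by (smt (verit) divide_pos_pos of_nat_0_le_iff zero_le_power2 mult_nonneg_nonneg)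
    have "L t \<le> Mt * (2 * obj)" using lb by simp
    also have "\<dots> \<le> Mt * (D (t-1) - D t)" using prog Mt0 by (intro mult_left_mono)
    also have "\<dots> \<le> M * (D (t-1) - D t)" using MtM prog \<open>0 \<le> obj\<close> by (intro mult_right_mono) auto
    finally show ?thesis .
  qed
  have M0: "M \<ge> 0"
  proof -
    have t1: "1 \<in> {1..T}" using \<open>T \<ge> 1\<close> by simp
    have "c \<le> yr 1 - yl 1" unfolding c_def using t1 by (intro Min_le) auto
    moreover have "yr 1 \<le> K" "yl 1 \<ge> 1" "yl 1 \<le> yr 1" using labels t1 by auto
    ultimately have "c + 1 \<le> K" by arith
    then have "real (c + 1) \<le> real K" by (simp only: of_nat_le_iff)
    then have "real K - real c - 1 \<ge> 0" by simp
    moreover have "R2 \<ge> 0" unfolding R2_def using t1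
      by (meson Max_ge finite_atLeastAtMost finite_imageI imageI order.trans zero_le_power2)
    ultimately have "R2 * (real K - real c - 1) \<ge> 0" by simp
    then show ?thesis unfolding M_def using C by (smt (verit) divide_pos_pos)
  qed
  have "(\<Sum>t=1..T. L t) \<le> (\<Sum>t=1..T. M * (D (t-1) - D t))" using step by (rule sum_mono)
  also have "\<dots> = M * (D 0 - D T)" using telescope[of D T] by (simp add: sum_distrib_left[symmetric])
  also have "\<dots> \<le> M * D 0"
  proof -
    have "0 \<le> (\<Sum>i=1..K-1. (b' i - snd (v T) i)\<^sup>2)" by (intro sum_nonneg) auto
    then have "D T \<ge> 0" unfolding D_def by (simp add: add_nonneg_nonneg)
    then show ?thesis using M0 by (intro mult_left_mono) auto
  qed
  also have "D 0 = (norm u)\<^sup>2 + (\<Sum>i=1..K - 1. (b i)\<^sup>2)"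
    unfolding D_def v_def by (auto simp: b'_def intro: sum.cong)
  finally show ?thesis unfolding L_def M_def R2_def c_def v_def .
qed

end
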